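(* Let $X$ be a smooth real Banach space of finite dimension $n$, let $S_X$ be its unit sphere, and let $S^n_{X,>0}$ be the set of $n$-tuples $(v_1,\dots,v_n)\in S_X^n$ (viewed as $n\times n$ real matrices with rows $v_i$) that are linearly independent, regarded as a differentiable manifold. Then $\{v_1,\dots,v_n\}$ is an Auerbach basis of $X$ if and only if $(v_1,\dots,v_n)$ is a critical point of the determinant function $\det: S^n_{X,>0}\to\mathbb{R}$, i.e. $\sum_{k=1}^n \det(v_1,\dots,v_{k-1},u_k,v_{k+1},\dots,v_n)=0$ for all $u_k$ in the tangent space $T_{v_k}S_X$, $k=1,\dots,n$.
   Context: A Banach space is smooth if at every point of the unit sphere there is exactly one supporting hyperplane of the unit ball (equivalently, the norm is Gateaux differentiable at every nonzero point). In a real normed space $X$, $x\perp_B y$ (Birkhoff–James orthogonality) means $\|x\|\le\|x+\lambda y\|$ for all $\lambda\in\mathbb{R}$. A basis $\mathcal{B}$ of $X$ is an Auerbach basis if every $v\in\mathcal{B}$ satisfies $\|v\|=1$ and $v\perp_B w$ for all $w\in\mathrm{span}(\mathcal{B}\setminus\{v\})$. *)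

theory Defs
  imports "HOL-Analysis.Analysis"
begin

text \<open>The finite-dimensional real Banach space X of dimension n is modelled as
  real^'n (n = CARD('n)) equipped with an arbitrary norm N.\<close>

definition is_norm :: "('a::real_vector \<Rightarrow> real) \<Rightarrow> bool" where
  "is_norm N \<longleftrightarrow>
     (\<forall>x. 0 \<le> N x) \<and> (\<forall>x. N x = 0 \<longleftrightarrow> x = 0) \<and>
     (\<forall>c x. N (c *\<^sub>R x) = \<bar>c\<bar> * N x) \<and> (\<forall>x y. N (x + y) \<le> N x + N y)"

definition smooth_norm :: "('a::real_vector \<Rightarrow> real) \<Rightarrow> bool" where
  "smooth_norm N \<longleftrightarrow>
     (\<forall>x. x \<noteq> 0 \<longrightarrow> (\<exists>L. linear L \<and>
        (\<forall>y. ((\<lambda>t. N (x + t *\<^sub>R y)) has_real_derivative L y) (at 0))))"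

definition unit_sphere :: "('a \<Rightarrow> real) \<Rightarrow> 'a set" where
  "unit_sphere N = {x. N x = 1}"

definition tangent_space :: "'a::real_normed_vector set \<Rightarrow> 'a \<Rightarrow> 'a set" where
  "tangent_space S v = {u. \<exists>\<gamma> e. e > 0 \<and> (\<forall>t\<in>{-e<..<e}. \<gamma> t \<in> S) \<and> \<gamma> 0 = v \<and>
       (\<gamma> has_vector_derivative u) (at 0)}"

definition birkhoff_orth :: "('a::real_vector \<Rightarrow> real) \<Rightarrow> 'a \<Rightarrow> 'a \<Rightarrow> bool" where
  "birkhoff_orth N x y \<longleftrightarrow> (\<forall>c::real. N x \<le> N (x + c *\<^sub>R y))"

definition auerbach_basis :: "('a::real_vector \<Rightarrow> real) \<Rightarrow> 'a set \<Rightarrow> bool" where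
  "auerbach_basis N B \<longleftrightarrow>
     independent B \<and> span B = UNIV \<and>
     (\<forall>w\<in>B. N w = 1 \<and> (\<forall>y\<in>span (B - {w}). birkhoff_orth N w y))"

end

theory Submission imports Defs begin

lemma nrm:
  assumes "is_norm N"
  shows "N 0 = 0" "N (-x) = N x" "N (x + y) \<le> N x + N y" "N (c *\<^sub>R x) = \<bar>c\<bar> * N x"
    "0 \<le> N x" "N x - N y \<le> N (x - y)" "\<bar>N x - N y\<bar> \<le> N (x - y)"
proof -
  show 0: "N 0 = 0" using assms unfolding is_norm_def by auto
  show m: "N (-x) = N x" for x using assms unfolding is_norm_def
    by (metis abs_minus_cancel abs_one mult_1 scaleR_minus1_left)
  show t: "N (x + y) \<le> N x + N y" for x y using assms unfolding is_norm_def by auto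
  show "N (c *\<^sub>R x) = \<bar>c\<bar> * N x" using assms unfolding is_norm_def by auto
  show "0 \<le> N x" using assms unfolding is_norm_def by auto
  show d: "N x - N y \<le> N (x - y)" for x y using t[of "x - y" y] by simp
  show "\<bar>N x - N y\<bar> \<le> N (x - y)" using d[of x y] d[of y x] m[of "x - y"] by (simp add: abs_le_iff)
qed

lemma nrm_sum:
  assumes "is_norm N" "finite A"
  shows "N (sum f A) \<le> (\<Sum>a\<in>A. N (f a))"
  using assms(2)
proof (induction A rule: finite_induct)
  case empty then show ?case using nrm(1)[OF assms(1)] by simp
next
  case (insert a A)
  then show ?case using nrm(3)[OF assms(1), of "f a" "sum f A"] by simp
qed

lemma nrm_bound:
  fixes N :: "'a::euclidean_space \<Rightarrow> real"
  assumes "is_norm N"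
  obtains C where "C \<ge> 0" "\<And>x. N x \<le> C * norm x"
proof -
  let ?C = "\<Sum>b\<in>Basis. N b"
  have "N x \<le> ?C * norm x" for x
  proof -
    have "N x = N (\<Sum>b\<in>Basis. (x \<bullet> b) *\<^sub>R b)" by (simp add: euclidean_representation)
    also have "\<dots> \<le> (\<Sum>b\<in>Basis. N ((x \<bullet> b) *\<^sub>R b))" by (rule nrm_sum[OF assms]) simp
    also have "\<dots> = (\<Sum>b\<in>Basis. \<bar>x \<bullet> b\<bar> * N b)" using nrm(4)[OF assms] by simp
    also have "\<dots> \<le> (\<Sum>b\<in>Basis. norm x * N b)"
      by (rule sum_mono) (simp add: Basis_le_norm mult_right_mono nrm(5)[OF assms])
    also have "\<dots> = ?C * norm x" by (simp add: sum_distrib_left mult.commute)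
    finally show ?thesis .
  qed
  moreover have "?C \<ge> 0" using nrm(5)[OF assms] by (simp add: sum_nonneg)
  ultimately show ?thesis using that by blast
qed


lemma birk_iff:
  assumes N: "is_norm N" and D: "\<And>y. ((\<lambda>t. N (w + t *\<^sub>R y)) has_real_derivative L y) (at 0)"
  shows "birkhoff_orth N w y \<longleftrightarrow> L y = 0"
proof
  assume "birkhoff_orth N w y"
  then have "\<forall>t. \<bar>0 - t\<bar> < 1 \<longrightarrow> N (w + 0 *\<^sub>R y) \<le> N (w + t *\<^sub>R y)"
    unfolding birkhoff_orth_def by simp
  then show "L y = 0" using DERIV_local_min[OF D[of y], of 1] by simp
next
  assume L0: "L y = 0"
  have cv: "convex_on UNIV (\<lambda>t. N (w + t *\<^sub>R y))"
    unfolding convex_on_def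
  proof (intro conjI ballI allI impI)
    fix a b :: real and u v :: real
    assume uv: "0 \<le> u" "0 \<le> v" "u + v = 1"
    have "w + (u *\<^sub>R a + v *\<^sub>R b) *\<^sub>R y = u *\<^sub>R (w + a *\<^sub>R y) + v *\<^sub>R (w + b *\<^sub>R y)"
      using uv(3) by (simp add: algebra_simps flip: scaleR_add_left)
    then show "N (w + (u *\<^sub>R a + v *\<^sub>R b) *\<^sub>R y) \<le> u * N (w + a *\<^sub>R y) + v * N (w + b *\<^sub>R y)"
      using nrm(3)[OF N, of "u *\<^sub>R (w + a *\<^sub>R y)" "v *\<^sub>R (w + b *\<^sub>R y)"] nrm(4)[OF N] uv by simp
  qed simp
  show "birkhoff_orth N w y" unfolding birkhoff_orth_def
  proof
    fix c :: real
    have "L y * (c - 0) \<le> N (w + c *\<^sub>R y) - N (w + 0 *\<^sub>R y)"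
      by (rule convex_on_imp_above_tangent[OF cv]) (use D[of y] in auto)
    then show "N w \<le> N (w + c *\<^sub>R y)" using L0 by simp
  qed
qed

lemma L_self:
  assumes N: "is_norm N" and D: "\<And>y. ((\<lambda>t. N (w + t *\<^sub>R y)) has_real_derivative L y) (at 0)"
    and w: "N w = 1"
  shows "L w \<noteq> 0"
proof
  assume "L w = 0"
  then have "birkhoff_orth N w w" using birk_iff[OF N D] by simp
  then have "N w \<le> N (w + (-1) *\<^sub>R w)" unfolding birkhoff_orth_def by blast
  then show False using w nrm(1)[OF N] by simp
qed


lemma vd_lin: "((\<lambda>x::real. x *\<^sub>R u) has_vector_derivative 1 *\<^sub>R u) F"
  by (simp add: has_vector_derivative_def bounded_linear_scaleR_left bounded_linear_imp_has_derivative)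

lemma tangent_imp:
  fixes N :: "'a::euclidean_space \<Rightarrow> real"
  assumes N: "is_norm N" and D: "\<And>y. ((\<lambda>t. N (w + t *\<^sub>R y)) has_real_derivative L y) (at 0)"
    and u: "u \<in> tangent_space (unit_sphere N) w"
  shows "L u = 0"
proof -
  obtain \<gamma> e where e: "e > 0" and S: "\<forall>t\<in>{-e<..<e}. \<gamma> t \<in> unit_sphere N" and g0: "\<gamma> 0 = w"
    and gd: "(\<gamma> has_vector_derivative u) (at 0)"
    using u unfolding tangent_space_def by blast
  obtain C where C: "C \<ge> 0" "\<And>x. N x \<le> C * norm x" using nrm_bound[OF N] by blast
  define g where "g t = \<gamma> t - (w + t *\<^sub>R u)" for t
  have "(g has_vector_derivative (u - (0 + 1 *\<^sub>R u))) (at 0)"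
    unfolding g_def by (intro derivative_intros gd vd_lin) 
  then have "(g has_derivative (\<lambda>x. 0)) (at 0)" by (simp add: has_vector_derivative_def)
  then have gl: "((\<lambda>y. norm (g y) / norm y) \<longlongrightarrow> 0) (at 0)"
    unfolding has_derivative_iff_norm using g0 by (simp add: g_def)
  define h where "h t = N (w + t *\<^sub>R u) - 1" for t
  have "\<gamma> 0 \<in> unit_sphere N" using S e by auto
  then have h0: "h 0 = 0" using g0 by (simp add: h_def unit_sphere_def)
  have "eventually (\<lambda>y. norm ((h y - h 0) / (y - 0)) \<le> C * (norm (g y) / norm y)) (at (0::real))"
    unfolding eventually_at
  proof (intro exI[of _ e] conjI ballI impI)
    fix y :: real assume y: "y \<noteq> 0 \<and> dist y 0 < e"
    then have "y \<in> {-e<..<e}" by (auto simp: abs_less_iff)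
    then have "N (\<gamma> y) = 1" using S by (auto simp: unit_sphere_def)
    then have "\<bar>h y\<bar> \<le> N ((w + y *\<^sub>R u) - \<gamma> y)" unfolding h_def using nrm(7)[OF N] by metis
    also have "\<dots> = N (- g y)" by (simp add: g_def)
    also have "\<dots> = N (g y)" using nrm(2)[OF N] by simp
    also have "\<dots> \<le> C * norm (g y)" using C by simp
    finally show "norm ((h y - h 0) / (y - 0)) \<le> C * (norm (g y) / norm y)"
      using h0 y by (simp add: divide_right_mono)
  qed (use e in auto)
  moreover have "((\<lambda>y. C * (norm (g y) / norm y)) \<longlongrightarrow> 0) (at 0)"
    using tendsto_mult[OF tendsto_const gl, of C] by simp
  ultimately have "((\<lambda>y. (h y - h 0) / (y - 0)) \<longlongrightarrow> 0) (at 0)"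
    by (rule Lim_null_comparison)
  then have d1: "(h has_real_derivative 0) (at 0)" by (simp add: has_field_derivative_iff)
  have d2: "(h has_real_derivative (L u - 0)) (at 0)"
    unfolding h_def by (intro DERIV_diff D DERIV_const)
  show ?thesis using DERIV_unique[OF d1 d2] by simp
qed

lemma tangent_rev:
  fixes N :: "'a::euclidean_space \<Rightarrow> real"
  assumes N: "is_norm N" and D: "\<And>y. ((\<lambda>t. N (w + t *\<^sub>R y)) has_real_derivative L y) (at 0)"
    and w: "N w = 1" and L: "L u = 0"
  shows "u \<in> tangent_space (unit_sphere N) w"
proof -
  define e where "e = 1 / (N u + 1)"
  have Nu: "N u \<ge> 0" using nrm(5)[OF N] by simp
  have e: "e > 0" using Nu by (simp add: e_def)
  define \<gamma> where "\<gamma> t = inverse (N (w + t *\<^sub>R u)) *\<^sub>R (w + t *\<^sub>R u)" for t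
  have pos: "N (w + t *\<^sub>R u) > 0" if t: "t \<in> {-e<..<e}" for t
  proof -
    have "\<bar>t\<bar> < e" using t by auto
    then have "\<bar>t\<bar> * (N u + 1) < e * (N u + 1)" using Nu by (intro mult_strict_right_mono) auto
    then have "\<bar>t\<bar> * (N u + 1) < 1" using Nu by (simp add: e_def)
    then have "\<bar>t\<bar> * N u < 1" using Nu by (smt (verit) abs_ge_zero mult_left_mono)
    moreover have "N w - N (- (t *\<^sub>R u)) \<le> N (w - - (t *\<^sub>R u))" by (rule nrm(6)[OF N])
    ultimately show ?thesis using w nrm(2,4)[OF N] by simp
  qed
  have inS: "\<forall>t\<in>{-e<..<e}. \<gamma> t \<in> unit_sphere N"
  proof
    fix t assume "t \<in> {-e<..<e}"
    then have "N (w + t *\<^sub>R u) > 0" by (rule pos)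
    then show "\<gamma> t \<in> unit_sphere N" using nrm(4)[OF N] by (simp add: \<gamma>_def unit_sphere_def)
  qed
  have "\<gamma> 0 = w" using w by (simp add: \<gamma>_def)
  have di: "((\<lambda>t. inverse (N (w + t *\<^sub>R u))) has_real_derivative (- (L u * inverse ((N (w + 0 *\<^sub>R u)) ^ Suc (Suc 0))))) (at 0)"
    by (rule DERIV_inverse_fun[OF D]) (use w in simp)
  have dv: "((\<lambda>t. w + t *\<^sub>R u) has_vector_derivative (0 + 1 *\<^sub>R u)) (at 0)"
    by (intro derivative_intros vd_lin)
  have "(\<gamma> has_vector_derivative (inverse (N (w + 0 *\<^sub>R u)) *\<^sub>R (0 + 1 *\<^sub>R u) + (- (L u * inverse ((N (w + 0 *\<^sub>R u)) ^ Suc (Suc 0)))) *\<^sub>R (w + 0 *\<^sub>R u))) (at 0)"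
    unfolding \<gamma>_def by (rule has_vector_derivative_scaleR[OF di dv])
  then have "(\<gamma> has_vector_derivative u) (at 0)" using w L by simp
  then show ?thesis unfolding tangent_space_def using e inS \<open>\<gamma> 0 = w\<close> by blast
qed


lemma span_full:
  fixes v :: "'n::finite \<Rightarrow> real^'n"
  assumes "inj v" "independent (range v)"
  shows "span (range v) = UNIV"
proof -
  have "card (range v) = dim (UNIV :: (real^'n) set)"
    using assms(1) by (simp add: card_image)
  then show ?thesis using card_eq_dim[of "range v" UNIV] assms(2) by auto
qed

lemma detV:
  fixes v :: "'n::finite \<Rightarrow> real^'n"
  assumes "inj v" "independent (range v)"
  shows "det (\<chi> i. v i) \<noteq> 0"
proof
  assume "det (\<chi> i. v i) = 0"
  then have "\<not> invertible (\<chi> i. v i)" using invertible_det_nz by blast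
  then obtain c i where c: "(\<Sum>i\<in>UNIV. c i *s row i (\<chi> i. v i)) = 0" and ci: "c i \<noteq> 0"
    unfolding invertible_right_inverse matrix_right_invertible_independent_rows by blast
  have "(\<Sum>x\<in>range v. c (inv v x) *\<^sub>R x) = (\<Sum>i\<in>UNIV. c (inv v (v i)) *\<^sub>R v i)"
    using assms(1) by (simp add: sum.reindex)
  also have "\<dots> = (\<Sum>i\<in>UNIV. c i *s row i (\<chi> i. v i))"
    using assms(1) by (simp add: row_def scalar_mult_eq_scaleR)
  finally have "(\<Sum>x\<in>range v. c (inv v x) *\<^sub>R x) = 0" using c by simp
  then have "c (inv v (v i)) = 0"
    using independentD[OF assms(2), of "range v" "\<lambda>x. c (inv v x)" "v i"] by simp
  then show False using ci assms(1) by simp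
qed

lemma det_repl:
  fixes v :: "'n::finite \<Rightarrow> real^'n"
  assumes "inj v" "independent (range v)"
  shows "det (\<chi> i. if i = k then u else v i) = 0 \<longleftrightarrow> u \<in> span (v ` (UNIV - {k}))"
proof
  assume u: "u \<in> span (v ` (UNIV - {k}))"
  let ?A = "(\<chi> i. if i = k then 0 else v i) :: real^'n^'n"
  have rA: "{row j ?A |j. j \<noteq> k} = v ` (UNIV - {k})" by (auto simp: row_def)
  have "det (\<chi> i. if i = k then row k ?A + u else row i ?A) = det ?A"
    by (rule det_row_span) (use u rA in \<open>simp add: span_vec_eq\<close>)
  moreover have "(\<chi> i. if i = k then row k ?A + u else row i ?A) = (\<chi> i. if i = k then u else v i)"
    by (simp add: row_def vec_eq_iff)
  moreover have "det ?A = 0" using det_row_0[of k v] by simp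
  ultimately show "det (\<chi> i. if i = k then u else v i) = 0" by simp
next
  assume d: "det (\<chi> i. if i = k then u else v i) = 0"
  have "u \<in> span (insert (v k) (v ` (UNIV - {k})))"
    using span_full[OF assms] by (metis UNIV_I image_insert insert_Diff_single insert_absorb span_base span_full[OF assms] iso_tuple_UNIV_I UNIV_I) 
  then obtain c where c: "u - c *\<^sub>R v k \<in> span (v ` (UNIV - {k}))" using span_breakdown_eq by blast
  let ?A = "(\<chi> i. if i = k then c *s v k else v i) :: real^'n^'n"
  have rA: "{row j ?A |j. j \<noteq> k} = v ` (UNIV - {k})" by (auto simp: row_def)
  have "det (\<chi> i. if i = k then row k ?A + (u - c *\<^sub>R v k) else row i ?A) = det ?A"
    by (rule det_row_span) (use c rA in \<open>simp add: span_vec_eq\<close>)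
  moreover have "(\<chi> i. if i = k then row k ?A + (u - c *\<^sub>R v k) else row i ?A) = (\<chi> i. if i = k then u else v i)"
    by (simp add: row_def vec_eq_iff scalar_mult_eq_scaleR)
  moreover have "?A = (\<chi> i. if i = k then c *s v i else v i)" by (simp add: vec_eq_iff)
  then have "det ?A = c * det (\<chi> i. if i = k then v i else v i)" using det_row_mul[of k c v v] by simp
  ultimately have "c * det (\<chi> i. v i) = 0" using d by simp
  then have "c = 0" using detV[OF assms] by simp
  then show "u \<in> span (v ` (UNIV - {k}))" using c by simp
qed


theorem mainTheorem2:
  fixes N :: "real^'n \<Rightarrow> real" and v :: "'n \<Rightarrow> real^'n"
  assumes "is_norm N" and "smooth_norm N"
    and "\<forall>i. v i \<in> unit_sphere N"
    and "inj v" and "independent (range v)"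
  shows "auerbach_basis N (range v) \<longleftrightarrow>
    (\<forall>u :: 'n \<Rightarrow> real^'n. (\<forall>k. u k \<in> tangent_space (unit_sphere N) (v k)) \<longrightarrow>
       (\<Sum>k\<in>UNIV. det (\<chi> i. if i = k then u k else v i)) = 0)"
proof -
  note N = assms(1)
  have v1: "N (v k) = 1" for k using assms(3) by (simp add: unit_sphere_def)
  have "v k \<noteq> 0" for k using v1[of k] nrm(1)[OF N] by auto
  then have "\<forall>k. \<exists>L. linear L \<and> (\<forall>y. ((\<lambda>t. N (v k + t *\<^sub>R y)) has_real_derivative L y) (at 0))"
    using assms(2) unfolding smooth_norm_def by blast
  then obtain Lf where Lf: "\<And>k. linear (Lf k)"
    and D: "\<And>k y. ((\<lambda>t. N (v k + t *\<^sub>R y)) has_real_derivative Lf k y) (at 0)"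
    by metis
  define H where "H k = span (v ` (UNIV - {k}))" for k
  have T: "u \<in> tangent_space (unit_sphere N) (v k) \<longleftrightarrow> Lf k u = 0" for k u
    using tangent_imp[OF N D] tangent_rev[OF N D v1] by blast
  have Rm: "range v - {v k} = v ` (UNIV - {k})" for k using assms(4) by (auto simp: inj_eq)
  have notin: "v k \<notin> H k" for k
  proof
    assume "v k \<in> H k"
    then have "v k \<in> span (range v - {v k})" using Rm[of k] unfolding H_def by simp
    then show False using assms(5) unfolding dependent_def by blast
  qed
  have Lvk: "Lf k (v k) \<noteq> 0" for k using L_self[OF N D v1] .
  have key: "(\<forall>y\<in>H k. Lf k y = 0) \<longleftrightarrow> (\<forall>u. Lf k u = 0 \<longrightarrow> u \<in> H k)" for k
  proof
    assume A: "\<forall>y\<in>H k. Lf k y = 0"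
    show "\<forall>u. Lf k u = 0 \<longrightarrow> u \<in> H k"
    proof (intro allI impI)
      fix u assume u: "Lf k u = 0"
      have "u \<in> span (insert (v k) (v ` (UNIV - {k})))"
        by (metis UNIV_I image_insert insert_Diff_single insert_absorb span_full[OF assms(4,5)])
      then obtain c where c: "u - c *\<^sub>R v k \<in> H k" unfolding H_def using span_breakdown_eq by blast
      then have "Lf k (u - c *\<^sub>R v k) = 0" using A by blast
      then have "c * Lf k (v k) = 0" using u Lf[of k] by (simp add: linear_diff linear_scale)
      then have "c = 0" using Lvk by simp
      then show "u \<in> H k" using c by simp
    qed
  next
    assume A: "\<forall>u. Lf k u = 0 \<longrightarrow> u \<in> H k"
    show "\<forall>y\<in>H k. Lf k y = 0"
    proof
      fix y assume y: "y \<in> H k"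
      define a where "a = Lf k y / Lf k (v k)"
      have "Lf k (y - a *\<^sub>R v k) = 0" using Lvk Lf[of k] by (simp add: linear_diff linear_scale a_def)
      then have "y - a *\<^sub>R v k \<in> H k" using A by blast
      then have "y - (y - a *\<^sub>R v k) \<in> H k" using y unfolding H_def by (metis span_diff)
      then have "a *\<^sub>R v k \<in> H k" by simp
      have "a = 0"
      proof (rule ccontr)
        assume "a \<noteq> 0"
        have "inverse a *\<^sub>R (a *\<^sub>R v k) \<in> H k"
          using \<open>a *\<^sub>R v k \<in> H k\<close> unfolding H_def by (rule span_scale)
        then show False using notin[of k] \<open>a \<noteq> 0\<close> by simp
      qed
      then show "Lf k y = 0" using Lvk by (simp add: a_def)
    qed
  qed
  have aub: "auerbach_basis N (range v) \<longleftrightarrow> (\<forall>k. \<forall>y\<in>H k. Lf k y = 0)"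
    unfolding auerbach_basis_def H_def using assms(5) span_full[OF assms(4,5)] v1 Rm
      birk_iff[OF N D] by auto
  have dets: "(\<forall>u :: 'n \<Rightarrow> real^'n. (\<forall>k. u k \<in> tangent_space (unit_sphere N) (v k)) \<longrightarrow>
       (\<Sum>k\<in>UNIV. det (\<chi> i. if i = k then u k else v i)) = 0) \<longleftrightarrow> (\<forall>k u. Lf k u = 0 \<longrightarrow> u \<in> H k)"
  proof
    assume A: "\<forall>u :: 'n \<Rightarrow> real^'n. (\<forall>k. u k \<in> tangent_space (unit_sphere N) (v k)) \<longrightarrow>
       (\<Sum>k\<in>UNIV. det (\<chi> i. if i = k then u k else v i)) = 0"
    show "\<forall>k u. Lf k u = 0 \<longrightarrow> u \<in> H k"
    proof (intro allI impI)
      fix k u assume u: "Lf k u = 0"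
      define U where "U j = (if j = k then u else 0)" for j
      have "\<forall>j. U j \<in> tangent_space (unit_sphere N) (v j)"
        using u Lf by (auto simp: U_def T linear_0)
      then have s: "(\<Sum>j\<in>UNIV. det (\<chi> i. if i = j then U j else v i)) = 0" using A by blast
      have "det (\<chi> i. if i = j then U j else v i) = (if j = k then det (\<chi> i. if i = k then u else v i) else 0)" for j
      proof (cases "j = k")
        case True then show ?thesis unfolding U_def by (simp cong: if_cong)
      next
        case False
        then have "U j = 0" by (simp add: U_def)
        then show ?thesis using False det_repl[OF assms(4,5), of j 0] by (simp add: span_zero cong: if_cong)
      qed
      then have "det (\<chi> i. if i = k then u else v i) = 0" using s by simp
      then show "u \<in> H k" using det_repl[OF assms(4,5)] unfolding H_def by blast
    qed
  next
    assume A: "\<forall>k u. Lf k u = 0 \<longrightarrow> u \<in> H k"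
    show "\<forall>u :: 'n \<Rightarrow> real^'n. (\<forall>k. u k \<in> tangent_space (unit_sphere N) (v k)) \<longrightarrow>
       (\<Sum>k\<in>UNIV. det (\<chi> i. if i = k then u k else v i)) = 0"
    proof (intro allI impI)
      fix U :: "'n \<Rightarrow> real^'n" assume "\<forall>k. U k \<in> tangent_space (unit_sphere N) (v k)"
      then have "U k \<in> H k" for k using A T by blast
      then have "det (\<chi> i. if i = k then U k else v i) = 0" for k
        using det_repl[OF assms(4,5)] unfolding H_def by blast
      then show "(\<Sum>k\<in>UNIV. det (\<chi> i. if i = k then U k else v i)) = 0" by simp
    qed
  qed
  show ?thesis using aub dets key by blast
qed

end
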